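(* Let $P$ be a projection algebra. If $p_1,\dots,p_k,q_1,\dots,q_l\in P$ satisfy $p_1\,\mathscr F\,p_2\,\mathscr F\cdots\mathscr F\,p_k$ and $q_1\,\mathscr F\,q_2\,\mathscr F\cdots\mathscr F\,q_l$, then $\theta_{p_1}\cdots\theta_{p_k}=\theta_{q_1}\cdots\theta_{q_l}$ implies $p_k=q_l$, and $\delta_{p_k}\cdots\delta_{p_1}=\delta_{q_l}\cdots\delta_{q_1}$ implies $p_1=q_1$.
   Context: Maps are written to the right of their arguments and composed left to right. A projection algebra is a set $P$ with maps $\theta_p,\delta_p:P\to P$ ($p\in P$) such that for all $p,q\in P$: $p\theta_p=p$, $p\delta_p=p$; $p\theta_{q\theta_p}=q\theta_p$, $p\delta_{q\delta_p}=q\delta_p$; $\theta_q\theta_{q\theta_p}=\theta_q\theta_p$, $\delta_q\delta_{q\delta_p}=\delta_q\delta_p$; $\theta_p\delta_p=\theta_p$, $\delta_p\theta_p=\delta_p$; $\theta_{p\delta_q}\theta_p=\theta_q\theta_p$, $\delta_{p\theta_q}\delta_p=\delta_q\delta_p$. The relation $p\,\mathscr F\,q$ means $p=q\delta_p$ and $q=p\theta_q$. *)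

theory Defs
  imports Main
begin

text \<open>Maps act on the right. We encode the map theta_p by th p, so that
  x theta_p is th p x; similarly x delta_p is de p x. A projection algebra
  is a carrier set P with such maps (closed on P) satisfying the axioms;
  equalities of maps are equalities on all of P.\<close>

definition projection_algebra ::
  "'a set \<Rightarrow> ('a \<Rightarrow> 'a \<Rightarrow> 'a) \<Rightarrow> ('a \<Rightarrow> 'a \<Rightarrow> 'a) \<Rightarrow> bool" where
  "projection_algebra P th de \<longleftrightarrow>
    (\<forall>p\<in>P. \<forall>x\<in>P. th p x \<in> P \<and> de p x \<in> P) \<and>
    (\<forall>p\<in>P. th p p = p \<and> de p p = p) \<and>
    (\<forall>p\<in>P. \<forall>q\<in>P. th (th p q) p = th p q \<and> de (de p q) p = de p q) \<and>
    (\<forall>p\<in>P. \<forall>q\<in>P. \<forall>x\<in>P.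
        th (th p q) (th q x) = th p (th q x) \<and> de (de p q) (de q x) = de p (de q x)) \<and>
    (\<forall>p\<in>P. \<forall>x\<in>P. de p (th p x) = th p x \<and> th p (de p x) = de p x) \<and>
    (\<forall>p\<in>P. \<forall>q\<in>P. \<forall>x\<in>P.
        th p (th (de q p) x) = th p (th q x) \<and> de p (de (th q p) x) = de p (de q x))"

definition rel_F :: "('a \<Rightarrow> 'a \<Rightarrow> 'a) \<Rightarrow> ('a \<Rightarrow> 'a \<Rightarrow> 'a) \<Rightarrow> 'a \<Rightarrow> 'a \<Rightarrow> bool" where
  "rel_F th de p q \<longleftrightarrow> p = de p q \<and> q = th q p"

text \<open>theta_{p1} ... theta_{pk} (apply theta_{p1} first): x \<mapsto> fold th ps x.\<close>
definition theta_prod :: "('a \<Rightarrow> 'a \<Rightarrow> 'a) \<Rightarrow> 'a list \<Rightarrow> 'a \<Rightarrow> 'a" where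
  "theta_prod th ps x = fold th ps x"

text \<open>delta_{pk} ... delta_{p1} (apply delta_{pk} first): x \<mapsto> foldr de ps x.\<close>
definition delta_prod :: "('a \<Rightarrow> 'a \<Rightarrow> 'a) \<Rightarrow> 'a list \<Rightarrow> 'a \<Rightarrow> 'a" where
  "delta_prod de ps x = foldr de ps x"

end

theory Submission
  imports Defs
begin

lemma fold_in: "set ps \<subseteq> P \<Longrightarrow> x \<in> P \<Longrightarrow> projection_algebra P th de \<Longrightarrow> fold th ps x \<in> P"
  by (induction ps arbitrary: x) (auto simp: projection_algebra_def)

lemma foldr_in: "set ps \<subseteq> P \<Longrightarrow> x \<in> P \<Longrightarrow> projection_algebra P th de \<Longrightarrow> foldr de ps x \<in> P"
  by (induction ps arbitrary: x) (auto simp: projection_algebra_def)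

lemma fold_chain: "successively (rel_F th de) (a # r) \<Longrightarrow> fold th r a = last (a # r)"
proof (induction r arbitrary: a)
  case Nil then show ?case by simp
next
  case (Cons b r)
  then have "th b a = b" "successively (rel_F th de) (b # r)" by (auto simp: rel_F_def)
  then show ?case using Cons.IH by simp
qed

lemma foldr_chain: "successively (rel_F th de) (a # r) \<Longrightarrow> de (last (a # r)) (last (a # r)) = last (a # r)
   \<Longrightarrow> foldr de (a # r) (last (a # r)) = a"
proof (induction r arbitrary: a)
  case Nil then show ?case by simp
next
  case (Cons b r)
  then have "de a b = a" "successively (rel_F th de) (b # r)" by (auto simp: rel_F_def)
  then show ?case using Cons by simp
qed

lemma th_idem: "projection_algebra P th de \<Longrightarrow> p \<in> P \<Longrightarrow> x \<in> P \<Longrightarrow> th p (th p x) = th p x"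
proof -
  assume A: "projection_algebra P th de" "p \<in> P" "x \<in> P"
  then have c: "th p x \<in> P" and e1: "\<forall>y\<in>P. de p (th p y) = th p y \<and> th p (de p y) = de p y"
    unfolding projection_algebra_def by blast+
  have "th p (th p x) = th p (de p (th p x))" using e1 A by simp
  also have "\<dots> = de p (th p x)" using e1 c by blast
  also have "\<dots> = th p x" using e1 A by blast
  finally show ?thesis .
qed

lemma de_idem: "projection_algebra P th de \<Longrightarrow> p \<in> P \<Longrightarrow> x \<in> P \<Longrightarrow> de p (de p x) = de p x"
proof -
  assume A: "projection_algebra P th de" "p \<in> P" "x \<in> P"
  then have c: "de p x \<in> P" and e1: "\<forall>y\<in>P. de p (th p y) = th p y \<and> th p (de p y) = de p y"
    unfolding projection_algebra_def by blast+
  have "de p (de p x) = de p (th p (de p x))" using e1 A by simp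
  also have "\<dots> = th p (de p x)" using e1 c by blast
  also have "\<dots> = de p x" using e1 A by blast
  finally show ?thesis .
qed

theorem lemma4p14:
  assumes PA: "projection_algebra P th de"
    and ps: "ps \<noteq> []" "set ps \<subseteq> P" "successively (rel_F th de) ps"
    and qs: "qs \<noteq> []" "set qs \<subseteq> P" "successively (rel_F th de) qs"
  shows "((\<forall>x\<in>P. theta_prod th ps x = theta_prod th qs x) \<longrightarrow> last ps = last qs)
       \<and> ((\<forall>x\<in>P. delta_prod de ps x = delta_prod de qs x) \<longrightarrow> hd ps = hd qs)"
proof (intro conjI impI)
  have PAa: "\<forall>p\<in>P. \<forall>x\<in>P. th p x \<in> P \<and> de p x \<in> P"
    "\<forall>p\<in>P. th p p = p \<and> de p p = p"
    "\<forall>p\<in>P. \<forall>q\<in>P. th (th p q) p = th p q \<and> de (de p q) p = de p q"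
    using PA unfolding projection_algebra_def by simp_all
  obtain a r where pr: "ps = a # r" using ps(1) by (cases ps) auto
  obtain b s where qr: "qs = b # s" using qs(1) by (cases qs) auto
  have aP: "a \<in> P" "b \<in> P" "last ps \<in> P" "last qs \<in> P" "hd ps \<in> P" "hd qs \<in> P"
    using ps qs pr qr by auto
  {
    assume eq: "\<forall>x\<in>P. theta_prod th ps x = theta_prod th qs x"
    have fp: "fold th ps a = last ps"
      using fold_chain[of th de a r] ps(3) pr PAa(2) aP by simp
    have fq: "fold th qs b = last qs"
      using fold_chain[of th de b s] qs(3) qr PAa(2) aP by simp
    have dp: "fold th ps x = th (last ps) (fold th (butlast ps) x)" for x
      proof -
      have "fold th (butlast ps @ [last ps]) x = th (last ps) (fold th (butlast ps) x)" by simp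
      then show ?thesis using append_butlast_last_id[OF ps(1)] by simp
    qed
    have dq: "fold th qs x = th (last qs) (fold th (butlast qs) x)" for x
      proof -
      have "fold th (butlast qs @ [last qs]) x = th (last qs) (fold th (butlast qs) x)" by simp
      then show ?thesis using append_butlast_last_id[OF qs(1)] by simp
    qed
    have bp: "set (butlast ps) \<subseteq> P" "set (butlast qs) \<subseteq> P"
      using ps qs by (meson in_set_butlastD subset_iff)+
    define y where "y = fold th (butlast ps) b"
    define z where "z = fold th (butlast qs) a"
    have yP: "y \<in> P" "z \<in> P" unfolding y_def z_def using fold_in[OF bp(1) aP(2) PA] fold_in[OF bp(2) aP(1) PA] by simp_all
    have 1: "last qs = th (last ps) y"
      proof -
      have "last qs = fold th qs b" using fq by simp
      also have "\<dots> = fold th ps b" using eq aP unfolding theta_prod_def by simp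
      finally show ?thesis using dp y_def by simp
    qed
    have 2: "last ps = th (last qs) z"
      proof -
      have "last ps = fold th ps a" using fp by simp
      also have "\<dots> = fold th qs a" using eq aP unfolding theta_prod_def by simp
      finally show ?thesis using dq z_def by simp
    qed
    have "th (th (last ps) y) (last ps) = th (last ps) y" using PAa(3) aP yP by blast
    then have "th (last qs) (last ps) = last qs" using 1 by simp
    moreover have "th (last qs) (last ps) = last ps"
      using th_idem[OF PA aP(4) yP(2)] 2 by simp
    ultimately show "last ps = last qs" by simp
  }
  {
    assume eq: "\<forall>x\<in>P. delta_prod de ps x = delta_prod de qs x"
    have fp: "foldr de ps (last ps) = hd ps"
      using foldr_chain[of th de a r] ps(3) pr PAa(2) aP by simp
    have fq: "foldr de qs (last qs) = hd qs"
      using foldr_chain[of th de b s] qs(3) qr PAa(2) aP by simp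
    define y where "y = foldr de r (last qs)"
    define z where "z = foldr de s (last ps)"
    have yP: "y \<in> P" "z \<in> P" unfolding y_def z_def using foldr_in[of r P "last qs", OF _ aP(4) PA] foldr_in[of s P "last ps", OF _ aP(3) PA] ps(2) qs(2) pr qr
      by simp_all
    have 1: "hd qs = de (hd ps) y"
      proof -
      have "hd qs = foldr de qs (last qs)" using fq by simp
      also have "\<dots> = foldr de ps (last qs)" using eq aP unfolding delta_prod_def by simp
      finally show ?thesis using pr y_def by simp
    qed
    have 2: "hd ps = de (hd qs) z"
      proof -
      have "hd ps = foldr de ps (last ps)" using fp by simp
      also have "\<dots> = foldr de qs (last ps)" using eq aP unfolding delta_prod_def by simp
      finally show ?thesis using qr z_def by simp
    qed
    have "de (de (hd ps) y) (hd ps) = de (hd ps) y" using PAa(3) aP yP by blast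
    then have "de (hd qs) (hd ps) = hd qs" using 1 by simp
    moreover have "de (hd qs) (hd ps) = hd ps"
      using de_idem[OF PA aP(6) yP(2)] 2 by simp
    ultimately show "hd ps = hd qs" by simp
  }
qed

end
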